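(* If $f:T^2\to\mathbb R^4$ is a conformal immersion and $\alpha\in\mathrm{span}_{\mathbb H}\{1,f\}\subset H^0$ (nowhere vanishing where defined), then the Darboux transform of $f$ given by $\alpha$ is a constant map $\hat f=c$ with $c\in\mathbb H\cup\{\infty\}$. In particular, if the complex dimension of the space of global holomorphic sections is minimal, that is $\dim_{\mathbb C}H^0=4$, then every Darboux transform given by the trivial multiplier is constant.
   Context: Identify $\mathbb R^4=\mathbb H$, $S^4=\mathbb{HP}^1=\mathbb H\cup\{\infty\}$ with $x\mapsto\begin{pmatrix}x\\1\end{pmatrix}\mathbb H$ and $\infty=\begin{pmatrix}1\\0\end{pmatrix}\mathbb H$. Let $T^2=\mathbb C/\Gamma$ and view $f$ as a $\Gamma$-periodic map on $\mathbb C$ with left normal $N$ ($*df=N\,df$). A map $\alpha:\mathbb C\to\mathbb H$ is holomorphic if $*d\alpha=N\,d\alpha$; $H^0$ denotes the space of $\Gamma$-periodic holomorphic maps (trivial multiplier), a right quaternionic (hence complex) vector space; $1,f\in H^0$. Darboux transform given by a holomorphic section with multiplier $\alpha$: define $\hat T$ by $d\alpha=-df\,\hat T\alpha$, $\nu=\hat T\alpha$, and set $\hat f=\begin{pmatrix}f\nu+\alpha\\ \nu\end{pmatrix}\mathbb H\in\mathbb{HP}^1$ (equal to $f+\hat T^{-1}$ where $\hat T\ne0$; if $\alpha$ is constant then $\hat T=0$ and $\hat f=\infty$). *)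

theory Defs
  imports "HOL-Analysis.Analysis"
begin

text \<open>Quaternions H modelled as C x C (Cayley-Dickson): (a,b) stands for a + b j,
  with a, b complex.  The norm of the product space is the quaternionic norm.\<close>
type_synonym quat = "complex \<times> complex"

definition qmul :: "quat \<Rightarrow> quat \<Rightarrow> quat" where
  "qmul p q = (fst p * fst q - snd p * cnj (snd q), fst p * snd q + snd p * cnj (fst q))"

definition qone :: quat where "qone = (1, 0)"

text \<open>embedding of a complex number c into H (c acts on the right as complex scalar)\<close>
definition qcplx :: "complex \<Rightarrow> quat" where "qcplx c = (c, 0)"

definition dx :: "(complex \<Rightarrow> quat) \<Rightarrow> complex \<Rightarrow> quat" where
  "dx g z = frechet_derivative g (at z) 1"
definition dy :: "(complex \<Rightarrow> quat) \<Rightarrow> complex \<Rightarrow> quat" where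
  "dy g z = frechet_derivative g (at z) \<i>"

definition lattice :: "complex \<Rightarrow> complex \<Rightarrow> bool" where
  "lattice w1 w2 \<longleftrightarrow> Im (w2 * cnj w1) \<noteq> 0"

definition periodic :: "complex \<Rightarrow> complex \<Rightarrow> (complex \<Rightarrow> 'a) \<Rightarrow> bool" where
  "periodic w1 w2 g \<longleftrightarrow> (\<forall>z. g (z + w1) = g z \<and> g (z + w2) = g z)"

text \<open>f: T^2 = C/Gamma -> R^4 = H conformal immersion with left normal N: *df = N df,
  i.e. f_y = N f_x, with N^2 = -1 (so N is a unit imaginary quaternion), df injective.\<close>
definition conformal_immersion ::
  "complex \<Rightarrow> complex \<Rightarrow> (complex \<Rightarrow> quat) \<Rightarrow> (complex \<Rightarrow> quat) \<Rightarrow> bool" where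
  "conformal_immersion w1 w2 f N \<longleftrightarrow>
     lattice w1 w2 \<and> periodic w1 w2 f \<and> periodic w1 w2 N \<and>
     (\<forall>z. f differentiable (at z)) \<and>
     (\<forall>z. inj (frechet_derivative f (at z))) \<and>
     (\<forall>z. qmul (N z) (N z) = - qone) \<and>
     (\<forall>z. dy f z = qmul (N z) (dx f z))"

definition holomorphic_wrt :: "(complex \<Rightarrow> quat) \<Rightarrow> (complex \<Rightarrow> quat) \<Rightarrow> bool" where
  "holomorphic_wrt N \<alpha> \<longleftrightarrow>
     (\<forall>z. \<alpha> differentiable (at z)) \<and> (\<forall>z. dy \<alpha> z = qmul (N z) (dx \<alpha> z))"

text \<open>H^0: Gamma-periodic holomorphic maps (trivial multiplier)\<close>
definition H0 :: "complex \<Rightarrow> complex \<Rightarrow> (complex \<Rightarrow> quat) \<Rightarrow> (complex \<Rightarrow> quat) set" where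
  "H0 w1 w2 N = {\<alpha>. holomorphic_wrt N \<alpha> \<and> periodic w1 w2 \<alpha>}"

definition cdim_eq_4 :: "(complex \<Rightarrow> quat) set \<Rightarrow> bool" where
  "cdim_eq_4 S \<longleftrightarrow> (\<exists>b :: nat \<Rightarrow> complex \<Rightarrow> quat.
     (\<forall>k<4. b k \<in> S) \<and>
     (\<forall>\<alpha>\<in>S. \<exists>c :: nat \<Rightarrow> complex. \<alpha> = (\<lambda>z. \<Sum>k<4. qmul (b k z) (qcplx (c k)))) \<and>
     (\<forall>c :: nat \<Rightarrow> complex. (\<forall>z. (\<Sum>k<4. qmul (b k z) (qcplx (c k))) = 0) \<longrightarrow> (\<forall>k<4. c k = 0)))"

definition darboux_T ::
  "(complex \<Rightarrow> quat) \<Rightarrow> (complex \<Rightarrow> quat) \<Rightarrow> (complex \<Rightarrow> quat) \<Rightarrow> bool" where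
  "darboux_T f \<alpha> T \<longleftrightarrow> (\<forall>z v. frechet_derivative \<alpha> (at z) v =
       - qmul (frechet_derivative f (at z) v) (qmul (T z) (\<alpha> z)))"

text \<open>HP^1: the point of HP^1 spanned by a nonzero vector of H^2 is the right quaternionic line\<close>
definition hp1_point :: "quat \<times> quat \<Rightarrow> (quat \<times> quat) set" where
  "hp1_point v = {(qmul (fst v) l, qmul (snd v) l) | l. True}"

definition darboux_vec ::
  "(complex \<Rightarrow> quat) \<Rightarrow> (complex \<Rightarrow> quat) \<Rightarrow> (complex \<Rightarrow> quat) \<Rightarrow> complex \<Rightarrow> quat \<times> quat" where
  "darboux_vec f \<alpha> T z = (let \<nu> = qmul (T z) (\<alpha> z) in (qmul (f z) \<nu> + \<alpha> z, \<nu>))"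

definition darboux_transform ::
  "(complex \<Rightarrow> quat) \<Rightarrow> (complex \<Rightarrow> quat) \<Rightarrow> (complex \<Rightarrow> quat) \<Rightarrow> complex \<Rightarrow> (quat \<times> quat) set" where
  "darboux_transform f \<alpha> T z = hp1_point (darboux_vec f \<alpha> T z)"

definition constant_hp1 :: "(complex \<Rightarrow> (quat \<times> quat) set) \<Rightarrow> bool" where
  "constant_hp1 F \<longleftrightarrow> (\<exists>c. c \<noteq> (0,0) \<and> (\<forall>z. F z = hp1_point c))"

end

theory Submission
  imports Defs
begin

lemma qmul_assoc: "qmul (qmul p q) r = qmul p (qmul q r)"
  by (simp add: qmul_def algebra_simps)

lemma qmul_linear: "linear (\<lambda>x. qmul x a)"
  by (rule linearI) (auto simp: qmul_def algebra_simps scaleR_conv_of_real)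

lemma qmul_bl: "bounded_linear (\<lambda>x. qmul x a)"
  using qmul_linear linear_conv_bounded_linear by blast

lemma qmul_right_add: "qmul d (x + y) = qmul d x + qmul d y"
  by (simp add: qmul_def algebra_simps)
lemma qmul_right_minus: "qmul d (- x) = - qmul d x"
  by (simp add: qmul_def algebra_simps)
lemma qmul_right_diff: "qmul d (x - y) = qmul d x - qmul d y"
  by (simp add: qmul_def algebra_simps)
lemma qmul_left_add: "qmul (x + y) d = qmul x d + qmul y d"
  by (simp add: qmul_def algebra_simps)
lemma qmul_left_zero: "qmul 0 d = 0" and qmul_right_zero: "qmul d 0 = 0"
  by (simp_all add: qmul_def zero_prod_def)
lemma qmul_right_scaleR: "qmul d (r *\<^sub>R x) = r *\<^sub>R qmul d x"
  by (simp add: qmul_def algebra_simps scaleR_conv_of_real)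

lemma qmul_nozd: "qmul d w = 0 \<Longrightarrow> d \<noteq> 0 \<Longrightarrow> w = 0"
proof -
  assume h: "qmul d w = 0" "d \<noteq> 0"
  define n where "n = (cmod (fst d))^2 + (cmod (snd d))^2"
  have A: "qmul (qmul (cnj (fst d), - snd d) d) w = 0"
    by (simp add: qmul_assoc h(1)) (simp add: qmul_def zero_prod_def)
  have B: "qmul (cnj (fst d), - snd d) d = (of_real n, 0)"
  proof -
    have "complex_of_real n = fst d * cnj (fst d) + snd d * cnj (snd d)"
      unfolding n_def by (simp only: of_real_add complex_norm_square)
    then show ?thesis by (simp add: qmul_def mult.commute)
  qed
  have C: "n \<noteq> 0" using h(2) unfolding n_def
    by (cases d) (auto simp: add_nonneg_eq_0_iff zero_prod_def)
  have "(of_real n * fst w, of_real n * snd w) = (0::quat)"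
    using A unfolding B by (simp add: qmul_def)
  then show ?thesis using C by (cases w) (simp add: zero_prod_def)
qed

lemma qmul_cancel: "qmul d x = qmul d y \<Longrightarrow> d \<noteq> 0 \<Longrightarrow> x = y"
  using qmul_nozd[of d "x - y"] by (simp add: qmul_right_diff)

lemma g_deriv:
  assumes "f differentiable (at z)"
  shows "((\<lambda>z. qmul (f z) a + b) has_derivative (\<lambda>v. qmul (frechet_derivative f (at z) v) a)) (at z)"
proof -
  have "(f has_derivative frechet_derivative f (at z)) (at z)"
    using assms frechet_derivative_works by blast
  from bounded_linear.has_derivative[OF qmul_bl this]
  show ?thesis by (rule has_derivative_add_const)
qed

lemma g_frechet:
  assumes "f differentiable (at z)"
  shows "frechet_derivative (\<lambda>z. qmul (f z) a + b) (at z) = (\<lambda>v. qmul (frechet_derivative f (at z) v) a)"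
  using frechet_derivative_at[OF g_deriv[OF assms]] by simp

lemma df1_nz:
  assumes "conformal_immersion w1 w2 f N"
  shows "frechet_derivative f (at z) 1 \<noteq> 0"
proof
  assume h: "frechet_derivative f (at z) 1 = 0"
  have "(f has_derivative frechet_derivative f (at z)) (at z)"
    using assms frechet_derivative_works by (auto simp: conformal_immersion_def)
  hence "linear (frechet_derivative f (at z))" using has_derivative_linear by blast
  hence "frechet_derivative f (at z) 0 = 0" using linear_0 by blast
  moreover have "inj (frechet_derivative f (at z))" using assms by (auto simp: conformal_immersion_def)
  ultimately show False using h by (metis injD zero_neq_one)
qed

lemma g_zero:
  assumes "conformal_immersion w1 w2 f N" "\<forall>z. qmul (f z) a + b = 0"
  shows "a = 0 \<and> b = 0"
proof -
  have dif: "f differentiable (at 0)" using assms(1) by (auto simp: conformal_immersion_def)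
  have "(\<lambda>z. qmul (f z) a + b) = (\<lambda>z. 0)" using assms(2) by auto
  hence "frechet_derivative (\<lambda>z. qmul (f z) a + b) (at 0) = (\<lambda>v. 0)"
    using frechet_derivative_at[OF has_derivative_const[of "0::quat" "at (0::complex)"]] by simp
  hence "qmul (frechet_derivative f (at 0) 1) a = 0"
    using g_frechet[OF dif, of a b] by metis
  hence a: "a = 0" using qmul_nozd df1_nz[OF assms(1)] by blast
  then have "b = 0" using assms(2) by (simp add: qmul_right_zero)
  with a show ?thesis by simp
qed

lemma part1:
  assumes ci: "conformal_immersion w1 w2 f N"
    and nz: "\<forall>z. qmul (f z) a + b \<noteq> 0"
    and dT: "darboux_T f (\<lambda>z. qmul (f z) a + b) T"
  shows "constant_hp1 (darboux_transform f (\<lambda>z. qmul (f z) a + b) T)"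
proof -
  have nu: "qmul (T z) (qmul (f z) a + b) = - a" for z
  proof -
    have dif: "f differentiable (at z)" using ci by (auto simp: conformal_immersion_def)
    have "qmul (frechet_derivative f (at z) 1) a =
          - qmul (frechet_derivative f (at z) 1) (qmul (T z) (qmul (f z) a + b))"
      using dT g_frechet[OF dif, of a b] unfolding darboux_T_def by metis
    hence "qmul (frechet_derivative f (at z) 1) a =
          qmul (frechet_derivative f (at z) 1) (- qmul (T z) (qmul (f z) a + b))"
      by (simp add: qmul_right_minus)
    from qmul_cancel[OF this df1_nz[OF ci]] show ?thesis by (metis minus_minus)
  qed
  have vec: "darboux_vec f (\<lambda>z. qmul (f z) a + b) T z = (b, - a)" for z
    by (simp add: darboux_vec_def nu qmul_right_minus)
  have "(b, - a) \<noteq> (0, 0)" using nz by (auto simp: qmul_right_zero)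
  then show ?thesis unfolding constant_hp1_def darboux_transform_def vec by blast
qed

lemma g_H0:
  assumes ci: "conformal_immersion w1 w2 f N"
  shows "(\<lambda>z. qmul (f z) a + b) \<in> H0 w1 w2 N"
proof -
  have dif: "\<And>z. f differentiable (at z)" using ci by (auto simp: conformal_immersion_def)
  have conf: "\<And>z. dy f z = qmul (N z) (dx f z)" using ci by (auto simp: conformal_immersion_def)
  have per: "periodic w1 w2 f" using ci by (auto simp: conformal_immersion_def)
  have "(\<lambda>z. qmul (f z) a + b) differentiable (at z)" for z
    using g_deriv[OF dif] differentiable_def by blast
  moreover have "dy (\<lambda>z. qmul (f z) a + b) z = qmul (N z) (dx (\<lambda>z. qmul (f z) a + b) z)" for z
    using conf[of z] unfolding dx_def dy_def g_frechet[OF dif] by (simp add: qmul_assoc)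
  moreover have "periodic w1 w2 (\<lambda>z. qmul (f z) a + b)"
    using per by (simp add: periodic_def)
  ultimately show ?thesis by (simp add: H0_def holomorphic_wrt_def)
qed

definition comb :: "(nat \<Rightarrow> complex \<Rightarrow> quat) \<Rightarrow> (nat \<Rightarrow> complex) \<Rightarrow> complex \<Rightarrow> quat" where
  "comb bs c = (\<lambda>z. \<Sum>k<4. qmul (bs k z) (qcplx (c k)))"

definition pack :: "(nat \<Rightarrow> complex) \<Rightarrow> quat \<times> quat" where
  "pack c = ((c 0, c 1), (c 2, c 3))"

lemma lt4: "(k::nat) < 4 \<Longrightarrow> k = 0 \<or> k = 1 \<or> k = 2 \<or> k = 3" by arith

lemma pack_eq: "pack c = pack d \<longleftrightarrow> (\<forall>k<4. c k = d k)"
  by (auto simp: pack_def dest: lt4)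

lemma pack_add: "pack (\<lambda>k. c k + d k) = pack c + pack d"
  by (simp add: pack_def)
lemma pack_scale: "pack (\<lambda>k. of_real r * c k) = r *\<^sub>R pack c"
  by (simp add: pack_def scaleR_conv_of_real)

lemma qcplx_add: "qcplx (x + y) = qcplx x + qcplx y" by (simp add: qcplx_def)
lemma qcplx_diff: "qcplx (x - y) = qcplx x - qcplx y" by (simp add: qcplx_def)
lemma comb_add: "comb bs (\<lambda>k. c k + d k) = (\<lambda>z. comb bs c z + comb bs d z)"
  by (simp add: comb_def qcplx_add qmul_right_add sum.distrib)
lemma comb_diff: "comb bs (\<lambda>k. c k - d k) = (\<lambda>z. comb bs c z - comb bs d z)"
  by (simp add: comb_def qcplx_diff qmul_right_diff sum_subtractf)
lemma comb_scale: "comb bs (\<lambda>k. of_real r * c k) = (\<lambda>z. r *\<^sub>R comb bs c z)"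
proof -
  have "qcplx (of_real r * x) = r *\<^sub>R qcplx x" for x
    by (simp add: qcplx_def scaleR_conv_of_real)
  then show ?thesis by (simp add: comb_def qmul_right_scaleR scaleR_sum_right)
qed
lemma comb_cong: "\<forall>k<4. c k = d k \<Longrightarrow> comb bs c = comb bs d"
  by (auto simp: comb_def intro!: sum.cong)

lemma part2:
  assumes ci: "conformal_immersion w1 w2 f N" and cd: "cdim_eq_4 (H0 w1 w2 N)"
    and aH: "\<alpha> \<in> H0 w1 w2 N"
  shows "\<exists>a b. \<alpha> = (\<lambda>z. qmul (f z) a + b)"
proof -
  obtain bs :: "nat \<Rightarrow> complex \<Rightarrow> quat" where
    sp: "\<forall>\<alpha>\<in>H0 w1 w2 N. \<exists>c. \<alpha> = comb bs c" and
    ind: "\<forall>c. (\<forall>z. comb bs c z = 0) \<longrightarrow> (\<forall>k<4. c k = 0)"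
  proof -
    obtain bs :: "nat \<Rightarrow> complex \<Rightarrow> quat" where
      "\<forall>\<alpha>\<in>H0 w1 w2 N. \<exists>c :: nat \<Rightarrow> complex. \<alpha> = (\<lambda>z. \<Sum>k<4. qmul (bs k z) (qcplx (c k)))"
      "\<forall>c :: nat \<Rightarrow> complex. (\<forall>z. (\<Sum>k<4. qmul (bs k z) (qcplx (c k))) = 0) \<longrightarrow> (\<forall>k<4. c k = 0)"
      using cd unfolding cdim_eq_4_def by blast
    then show ?thesis using that unfolding comb_def by blast
  qed
  have uniq: "comb bs c = comb bs d \<Longrightarrow> \<forall>k<4. c k = d k" for c d
    using ind[rule_format, of "\<lambda>k. c k - d k"] by (simp add: comb_diff)
  define g where "g p = (\<lambda>z. qmul (f z) (fst p) + snd p)" for p :: "quat \<times> quat"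
  define coef where "coef p = (SOME c. g p = comb bs c)" for p
  have spec: "g p = comb bs (coef p)" for p
  proof -
    have "\<exists>c. g p = comb bs c" using sp g_H0[OF ci] unfolding g_def by blast
    then show ?thesis unfolding coef_def by (rule someI_ex)
  qed
  define L where "L p = pack (coef p)" for p
  have gadd: "g (p + q) = (\<lambda>z. g p z + g q z)" for p q
    by (simp add: g_def qmul_right_add algebra_simps)
  have gscale: "g (r *\<^sub>R p) = (\<lambda>z. r *\<^sub>R g p z)" for r p
    by (simp add: g_def qmul_right_scaleR algebra_simps)
  have lin: "linear L"
  proof (rule linearI)
    fix p q
    have "comb bs (coef (p + q)) = g (p + q)" by (rule spec[symmetric])
    also have "\<dots> = comb bs (\<lambda>k. coef p k + coef q k)" unfolding gadd comb_add by (simp only: spec)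
    finally have "comb bs (coef (p + q)) = comb bs (\<lambda>k. coef p k + coef q k)" .
    then have "pack (coef (p + q)) = pack (\<lambda>k. coef p k + coef q k)"
      unfolding pack_eq by (rule uniq)
    then show "L (p + q) = L p + L q" by (simp add: L_def pack_add)
  next
    fix r p
    have "comb bs (coef (r *\<^sub>R p)) = g (r *\<^sub>R p)" by (rule spec[symmetric])
    also have "\<dots> = comb bs (\<lambda>k. of_real r * coef p k)" unfolding gscale comb_scale by (simp only: spec)
    finally have "comb bs (coef (r *\<^sub>R p)) = comb bs (\<lambda>k. of_real r * coef p k)" .
    then have "pack (coef (r *\<^sub>R p)) = pack (\<lambda>k. of_real r * coef p k)"
      unfolding pack_eq by (rule uniq)
    then show "L (r *\<^sub>R p) = r *\<^sub>R L p" by (simp add: L_def pack_scale)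
  qed
  have "inj L"
    unfolding linear_injective_0[OF lin]
  proof (intro allI impI)
    fix p assume "L p = 0"
    then have "pack (coef p) = pack (\<lambda>k. 0)" by (simp add: L_def pack_def zero_prod_def)
    then have "comb bs (coef p) = comb bs (\<lambda>k. 0)" unfolding pack_eq by (rule comb_cong)
    then have "\<forall>z. g p z = 0" using spec by (simp add: comb_def qcplx_def qmul_right_zero zero_prod_def[symmetric])
    then have "fst p = 0 \<and> snd p = 0" using g_zero[OF ci] unfolding g_def by blast
    then show "p = 0" by (simp add: prod_eq_iff)
  qed
  then have "surj L" using linear_injective_imp_surjective[OF lin] by blast
  obtain c where ac: "\<alpha> = comb bs c" using sp aH by blast
  obtain p where "L p = pack c" using \<open>surj L\<close> by (metis surjD)
  then have "comb bs (coef p) = comb bs c" unfolding L_def pack_eq by (rule comb_cong)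
  then have "\<alpha> = g p" using ac spec by simp
  then show ?thesis unfolding g_def by blast
qed

theorem corollary3p5:
  fixes w1 w2 :: complex and f N :: "complex \<Rightarrow> quat"
  assumes "conformal_immersion w1 w2 f N"
  shows "(\<forall>a b T. (\<forall>z. qmul (f z) a + b \<noteq> 0) \<longrightarrow>
            darboux_T f (\<lambda>z. qmul (f z) a + b) T \<longrightarrow>
            constant_hp1 (darboux_transform f (\<lambda>z. qmul (f z) a + b) T))
       \<and> (cdim_eq_4 (H0 w1 w2 N) \<longrightarrow>
            (\<forall>\<alpha>\<in>H0 w1 w2 N. \<forall>T. (\<forall>z. \<alpha> z \<noteq> 0) \<longrightarrow> darboux_T f \<alpha> T \<longrightarrow>
               constant_hp1 (darboux_transform f \<alpha> T)))"
proof (intro conjI allI impI ballI)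
  fix a b T
  assume "\<forall>z. qmul (f z) a + b \<noteq> 0" "darboux_T f (\<lambda>z. qmul (f z) a + b) T"
  then show "constant_hp1 (darboux_transform f (\<lambda>z. qmul (f z) a + b) T)"
    using part1[OF assms] by blast
next
  fix \<alpha> T
  assume cd: "cdim_eq_4 (H0 w1 w2 N)" and aH: "\<alpha> \<in> H0 w1 w2 N"
    and nz: "\<forall>z. \<alpha> z \<noteq> 0" and dT: "darboux_T f \<alpha> T"
  obtain a b where ab: "\<alpha> = (\<lambda>z. qmul (f z) a + b)" using part2[OF assms cd aH] by blast
  show "constant_hp1 (darboux_transform f \<alpha> T)"
    using part1[OF assms, of a b T] nz dT unfolding ab by blast
qed

end
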